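(* In the setting below, for every $\nu\subseteq\{0,\dots,n\}$ with $|\nu|=n$, $$\|P^\pi_\nu\|\le\sup_{g\in K}\|\pi(g)\|^2.$$
   Context: Setting: $X$ is a pure $n$-dimensional partite simplicial complex (vertex set partitioned into $V_0,\dots,V_n$, each $n$-simplex having one vertex in each $V_i$; $\mathrm{type}(\tau)=\{i:\tau\cap V_i\neq\emptyset\}$), gallery connected, with all $1$-dimensional links (links of $(n-2)$-simplices) connected finite graphs. $G$ is a locally compact unimodular group with Haar measure $\mu$ acting cocompactly on $X$ by type-preserving simplicial automorphisms, with $G_\tau$ open compact for every $\tau\in X(n-2)\cup X(n-1)\cup X(n)$; $\pi$ is a strongly continuous representation of $G$ on a Banach space $\mathbb{E}$ with norm $|\cdot|$. For $k=n-2,n-1,n$, $D(k)$ is a set of representatives of the $G$-orbits on $X(k)$, chosen so that for $k_1<k_2$ every $\tau\in D(k_1)$ is contained in some $\sigma\in D(k_2)$. $K=\{g\in G:\exists\sigma,\sigma'\in D(n),\ |g.\sigma\cap\sigma'|\ge n-1\}$. $C(X(n),\pi)$ is the space of maps $\phi:X(n)\to\mathbb{E}$ with $\phi(g.\sigma)=\pi(g)\phi(\sigma)$, normed by $\|\phi\|^2=\sum_{\sigma\in D(n)}\frac{1}{\mu(G_\sigma)}|\phi(\sigma)|^2$. For $\nu\subseteq\{0,\dots,n\}$ with $|\nu|\in\{n-1,n\}$, write $\sigma\sim_\nu\sigma'$ if there is a simplex $\tau\subseteq\sigma\cap\sigma'$ with $\mathrm{type}(\tau)=\nu$, and $P^\pi_\nu\phi(\sigma)=\frac{1}{|\{\sigma':\sigma'\sim_\nu\sigma\}|}\sum_{\sigma'\sim_\nu\sigma}\phi(\sigma')$,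 an operator on $C(X(n),\pi)$. *)

theory Defs
  imports "HOL-Analysis.Analysis" "HOL-Algebra.Group"
begin

text \<open>A simplicial complex on vertex type 'v is a nonempty, downward closed family
  of finite vertex sets (the empty simplex is included). The k-simplices are the
  simplices with k+1 vertices; we index them by cardinality: cfaces X m = simplices
  with exactly m vertices, so X(k) = cfaces X (k+1).\<close>

definition abstract_simplicial_complex :: "'v set set \<Rightarrow> bool" where
  "abstract_simplicial_complex X \<longleftrightarrow> X \<noteq> {} \<and> (\<forall>s\<in>X. finite s) \<and> (\<forall>s\<in>X. \<forall>t. t \<subseteq> s \<longrightarrow> t \<in> X)"

definition cfaces :: "'v set set \<Rightarrow> nat \<Rightarrow> 'v set set" where
  "cfaces X m = {s \<in> X. card s = m}"

definition pure_dim :: "'v set set \<Rightarrow> nat \<Rightarrow> bool" where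
  "pure_dim X n \<longleftrightarrow> cfaces X (n+1) \<noteq> {} \<and> (\<forall>s\<in>X. card s \<le> n+1)
     \<and> (\<forall>s\<in>X. \<exists>t\<in>cfaces X (n+1). s \<subseteq> t)"

definition partite :: "'v set set \<Rightarrow> nat \<Rightarrow> ('v \<Rightarrow> nat) \<Rightarrow> bool" where
  "partite X n vtype \<longleftrightarrow> (\<forall>v\<in>\<Union>X. vtype v \<le> n)
     \<and> (\<forall>\<sigma>\<in>cfaces X (n+1). \<forall>i\<le>n. \<exists>!v. v \<in> \<sigma> \<and> vtype v = i)"

definition stype :: "('v \<Rightarrow> nat) \<Rightarrow> 'v set \<Rightarrow> nat set" where
  "stype vtype \<tau> = {i. \<exists>v\<in>\<tau>. vtype v = i}"

definition gallery_connected :: "'v set set \<Rightarrow> nat \<Rightarrow> bool" where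
  "gallery_connected X n \<longleftrightarrow>
     (\<forall>\<sigma>\<in>cfaces X (n+1). \<forall>\<sigma>'\<in>cfaces X (n+1).
        (\<lambda>a b. a \<in> cfaces X (n+1) \<and> b \<in> cfaces X (n+1) \<and> card (a \<inter> b) = n)\<^sup>*\<^sup>* \<sigma> \<sigma>')"

definition link :: "'v set set \<Rightarrow> 'v set \<Rightarrow> 'v set set" where
  "link X \<tau> = {\<eta> \<in> X. \<eta> \<inter> \<tau> = {} \<and> \<eta> \<union> \<tau> \<in> X}"

definition link_connected_finite_graph :: "'v set set \<Rightarrow> 'v set \<Rightarrow> bool" where
  "link_connected_finite_graph X \<tau> \<longleftrightarrow>
     (let V = {v. {v} \<in> link X \<tau>} in
       finite V \<and> V \<noteq> {} \<and>
       (\<forall>u\<in>V. \<forall>w\<in>V. (\<lambda>a b. a \<in> V \<and> b \<in> V \<and> a \<noteq> b \<and> {a, b} \<in> link X \<tau>)\<^sup>*\<^sup>* u w))"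

definition topological_group :: "'g monoid \<Rightarrow> 'g topology \<Rightarrow> bool" where
  "topological_group G T \<longleftrightarrow> group G \<and> topspace T = carrier G
     \<and> continuous_map (prod_topology T T) T (\<lambda>(x, y). x \<otimes>\<^bsub>G\<^esub> y)
     \<and> continuous_map T T (\<lambda>x. inv\<^bsub>G\<^esub> x)"

definition locally_compact_group :: "'g monoid \<Rightarrow> 'g topology \<Rightarrow> bool" where
  "locally_compact_group G T \<longleftrightarrow> topological_group G T \<and> Hausdorff_space T
     \<and> locally_compact_space T"

definition left_haar_measure :: "'g monoid \<Rightarrow> 'g topology \<Rightarrow> 'g measure \<Rightarrow> bool" where
  "left_haar_measure G T \<mu> \<longleftrightarrow>
     sets \<mu> = sets (sigma (topspace T) (Collect (openin T)))
     \<and> (\<forall>C. compactin T C \<longrightarrow> emeasure \<mu> C < \<infinity>)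
     \<and> (\<forall>U. openin T U \<and> U \<noteq> {} \<longrightarrow> emeasure \<mu> U > 0)
     \<and> (\<forall>A\<in>sets \<mu>. emeasure \<mu> A = (INF U\<in>{U. openin T U \<and> A \<subseteq> U}. emeasure \<mu> U))
     \<and> (\<forall>U. openin T U \<longrightarrow> emeasure \<mu> U = (SUP C\<in>{C. compactin T C \<and> C \<subseteq> U}. emeasure \<mu> C))
     \<and> (\<forall>g\<in>carrier G. \<forall>A\<in>sets \<mu>. emeasure \<mu> ((\<lambda>x. g \<otimes>\<^bsub>G\<^esub> x) ` A) = emeasure \<mu> A)"

definition unimodular_haar :: "'g monoid \<Rightarrow> 'g topology \<Rightarrow> 'g measure \<Rightarrow> bool" where
  "unimodular_haar G T \<mu> \<longleftrightarrow> left_haar_measure G T \<mu>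
     \<and> (\<forall>g\<in>carrier G. \<forall>A\<in>sets \<mu>. emeasure \<mu> ((\<lambda>x. x \<otimes>\<^bsub>G\<^esub> g) ` A) = emeasure \<mu> A)"

definition type_preserving_simplicial_action ::
  "'g monoid \<Rightarrow> ('g \<Rightarrow> 'v \<Rightarrow> 'v) \<Rightarrow> 'v set set \<Rightarrow> ('v \<Rightarrow> nat) \<Rightarrow> bool" where
  "type_preserving_simplicial_action G act X vtype \<longleftrightarrow>
     (\<forall>v\<in>\<Union>X. act \<one>\<^bsub>G\<^esub> v = v)
     \<and> (\<forall>g\<in>carrier G. \<forall>h\<in>carrier G. \<forall>v\<in>\<Union>X. act (g \<otimes>\<^bsub>G\<^esub> h) v = act g (act h v))
     \<and> (\<forall>g\<in>carrier G. \<forall>s\<in>X. act g ` s \<in> X)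
     \<and> (\<forall>g\<in>carrier G. \<forall>v\<in>\<Union>X. vtype (act g v) = vtype v)"

definition stab :: "'g monoid \<Rightarrow> ('g \<Rightarrow> 'v \<Rightarrow> 'v) \<Rightarrow> 'v set \<Rightarrow> 'g set" where
  "stab G act \<tau> = {g \<in> carrier G. act g ` \<tau> = \<tau>}"

definition orbit :: "'g monoid \<Rightarrow> ('g \<Rightarrow> 'v \<Rightarrow> 'v) \<Rightarrow> 'v set \<Rightarrow> 'v set set" where
  "orbit G act \<tau> = (\<lambda>g. act g ` \<tau>) ` carrier G"

definition cocompact_action :: "'g monoid \<Rightarrow> ('g \<Rightarrow> 'v \<Rightarrow> 'v) \<Rightarrow> 'v set set \<Rightarrow> bool" where
  "cocompact_action G act X \<longleftrightarrow> finite (orbit G act ` X)"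

definition orbit_representatives ::
  "'g monoid \<Rightarrow> ('g \<Rightarrow> 'v \<Rightarrow> 'v) \<Rightarrow> 'v set set \<Rightarrow> 'v set set \<Rightarrow> bool" where
  "orbit_representatives G act Y D \<longleftrightarrow> D \<subseteq> Y
     \<and> (\<forall>\<tau>\<in>Y. \<exists>\<rho>\<in>D. \<tau> \<in> orbit G act \<rho>)
     \<and> (\<forall>\<rho>\<in>D. \<forall>\<rho>'\<in>D. \<rho>' \<in> orbit G act \<rho> \<longrightarrow> \<rho> = \<rho>')"

definition strongly_continuous_rep ::
  "'g monoid \<Rightarrow> 'g topology \<Rightarrow> ('g \<Rightarrow> ('e::banach \<Rightarrow>\<^sub>L 'e)) \<Rightarrow> bool" where
  "strongly_continuous_rep G T \<pi> \<longleftrightarrow>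
     \<pi> \<one>\<^bsub>G\<^esub> = id_blinfun
     \<and> (\<forall>g\<in>carrier G. \<forall>h\<in>carrier G. \<pi> (g \<otimes>\<^bsub>G\<^esub> h) = \<pi> g o\<^sub>L \<pi> h)
     \<and> (\<forall>v. continuous_map T euclidean (\<lambda>g. \<pi> g v))"

definition equivariant_maps ::
  "'g monoid \<Rightarrow> ('g \<Rightarrow> 'v \<Rightarrow> 'v) \<Rightarrow> 'v set set \<Rightarrow> nat \<Rightarrow> ('g \<Rightarrow> ('e::banach \<Rightarrow>\<^sub>L 'e))
     \<Rightarrow> ('v set \<Rightarrow> 'e) set" where
  "equivariant_maps G act X n \<pi> =
     {\<phi>. (\<forall>\<sigma>. \<sigma> \<notin> cfaces X (n+1) \<longrightarrow> \<phi> \<sigma> = 0)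
        \<and> (\<forall>g\<in>carrier G. \<forall>\<sigma>\<in>cfaces X (n+1). \<phi> (act g ` \<sigma>) = \<pi> g (\<phi> \<sigma>))}"

definition cnorm :: "'g measure \<Rightarrow> 'g monoid \<Rightarrow> ('g \<Rightarrow> 'v \<Rightarrow> 'v) \<Rightarrow> 'v set set
     \<Rightarrow> ('v set \<Rightarrow> 'e::banach) \<Rightarrow> real" where
  "cnorm \<mu> G act Dn \<phi> = sqrt (\<Sum>\<sigma>\<in>Dn. (norm (\<phi> \<sigma>))\<^sup>2 / measure \<mu> (stab G act \<sigma>))"

definition nu_adj :: "'v set set \<Rightarrow> ('v \<Rightarrow> nat) \<Rightarrow> nat set \<Rightarrow> 'v set \<Rightarrow> 'v set \<Rightarrow> bool" where
  "nu_adj X vtype \<nu> \<sigma> \<sigma>' \<longleftrightarrow> (\<exists>\<tau>\<in>X. \<tau> \<subseteq> \<sigma> \<inter> \<sigma>' \<and> stype vtype \<tau> = \<nu>)"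

definition P_op :: "'v set set \<Rightarrow> nat \<Rightarrow> ('v \<Rightarrow> nat) \<Rightarrow> nat set
     \<Rightarrow> ('v set \<Rightarrow> 'e::banach) \<Rightarrow> ('v set \<Rightarrow> 'e)" where
  "P_op X n vtype \<nu> \<phi> \<sigma> =
     (if \<sigma> \<in> cfaces X (n+1) then
        (let N = {\<sigma>'\<in>cfaces X (n+1). nu_adj X vtype \<nu> \<sigma> \<sigma>'} in
          (1 / real (card N)) *\<^sub>R (\<Sum>\<sigma>'\<in>N. \<phi> \<sigma>'))
      else 0)"

definition op_norm_on :: "'a set \<Rightarrow> ('a \<Rightarrow> real) \<Rightarrow> ('a \<Rightarrow> 'a) \<Rightarrow> ereal" where
  "op_norm_on C N T = (SUP \<phi>\<in>{\<phi>\<in>C. N \<phi> \<noteq> 0}. ereal (N (T \<phi>) / N \<phi>))"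

definition Kset :: "'g monoid \<Rightarrow> ('g \<Rightarrow> 'v \<Rightarrow> 'v) \<Rightarrow> nat \<Rightarrow> 'v set set \<Rightarrow> 'g set" where
  "Kset G act n Dn = {g \<in> carrier G. \<exists>\<sigma>\<in>Dn. \<exists>\<sigma>'\<in>Dn. card (act g ` \<sigma> \<inter> \<sigma>') \<ge> n - 1}"

end

theory Submission
  imports Defs
begin

locale L37 =
  fixes X :: "'v set set" and n :: nat and vtype :: "'v \<Rightarrow> nat"
    and G :: "'g monoid" and T :: "'g topology" and \<mu> :: "'g measure"
    and act :: "'g \<Rightarrow> 'v \<Rightarrow> 'v"
    and \<pi> :: "'g \<Rightarrow> ('e::banach \<Rightarrow>\<^sub>L 'e)"
    and Dn1 Dn :: "'v set set"
    and \<nu> :: "nat set"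
  assumes n_pos: "n \<ge> 1"
    and complex: "abstract_simplicial_complex X"
    and pure: "pure_dim X n"
    and part: "partite X n vtype"
    and links: "\<forall>\<tau>\<in>cfaces X (n - 1). link_connected_finite_graph X \<tau>"
    and lcgroup: "locally_compact_group G T"
    and haar: "unimodular_haar G T \<mu>"
    and action: "type_preserving_simplicial_action G act X vtype"
    and cocompact: "cocompact_action G act X"
    and soc: "\<forall>\<tau>\<in>cfaces X (n - 1) \<union> cfaces X n \<union> cfaces X (n + 1).
        openin T (stab G act \<tau>) \<and> compactin T (stab G act \<tau>)"
    and D1: "orbit_representatives G act (cfaces X n) Dn1"
    and D0: "orbit_representatives G act (cfaces X (n + 1)) Dn"
    and nu: "\<nu> \<subseteq> {0..n}" "card \<nu> = n"
begin

abbreviation "V \<equiv> \<Union>X"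
abbreviation "Xn \<equiv> cfaces X (n+1)"

lemma grp: "group G" and top: "topspace T = carrier G"
  and mcont: "continuous_map (prod_topology T T) T (\<lambda>(x, y). x \<otimes>\<^bsub>G\<^esub> y)"
  using lcgroup unfolding locally_compact_group_def topological_group_def by auto

lemma X_fin: "s \<in> X \<Longrightarrow> finite s" and X_down: "s \<in> X \<Longrightarrow> t \<subseteq> s \<Longrightarrow> t \<in> X"
  using complex unfolding abstract_simplicial_complex_def by auto

lemma act_one: "v \<in> V \<Longrightarrow> act \<one>\<^bsub>G\<^esub> v = v"
  and act_mult: "g \<in> carrier G \<Longrightarrow> h \<in> carrier G \<Longrightarrow> v \<in> V \<Longrightarrow> act (g \<otimes>\<^bsub>G\<^esub> h) v = act g (act h v)"
  and act_X: "g \<in> carrier G \<Longrightarrow> s \<in> X \<Longrightarrow> act g ` s \<in> X"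
  and act_type: "g \<in> carrier G \<Longrightarrow> v \<in> V \<Longrightarrow> vtype (act g v) = vtype v"
  using action unfolding type_preserving_simplicial_action_def by auto

lemma act_V: assumes "g \<in> carrier G" "v \<in> V" shows "act g v \<in> V"
proof -
  from assms(2) obtain s where "s \<in> X" "v \<in> s" by auto
  then have "{v} \<in> X" using X_down by auto
  then have "act g ` {v} \<in> X" using act_X assms(1) by blast
  then show ?thesis by auto
qed

lemma act_inv: assumes "g \<in> carrier G" "v \<in> V" shows "act (inv\<^bsub>G\<^esub> g) (act g v) = v"
proof -
  have "act (inv\<^bsub>G\<^esub> g) (act g v) = act (inv\<^bsub>G\<^esub> g \<otimes>\<^bsub>G\<^esub> g) v"
    using act_mult assms grp by (simp add: group.inv_closed)
  also have "\<dots> = v" using assms grp act_one by (simp add: group.l_inv)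
  finally show ?thesis .
qed

lemma act_inv2: assumes "g \<in> carrier G" "v \<in> V" shows "act g (act (inv\<^bsub>G\<^esub> g) v) = v"
  using act_inv[of "inv\<^bsub>G\<^esub> g" v] assms grp by (simp add: group.inv_closed group.inv_inv)

lemma act_inj: "g \<in> carrier G \<Longrightarrow> inj_on (act g) V"
  by (metis act_inv inj_onI)

lemma sub_V: "s \<in> X \<Longrightarrow> s \<subseteq> V" by auto

lemma acts_one: "s \<subseteq> V \<Longrightarrow> act \<one>\<^bsub>G\<^esub> ` s = s"
  using act_one by (simp add: subset_iff image_iff)

lemma acts_V: "g \<in> carrier G \<Longrightarrow> s \<subseteq> V \<Longrightarrow> act g ` s \<subseteq> V"
  using act_V by blast

lemma acts_mult: "g \<in> carrier G \<Longrightarrow> h \<in> carrier G \<Longrightarrow> s \<subseteq> V \<Longrightarrow>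
    act (g \<otimes>\<^bsub>G\<^esub> h) ` s = act g ` act h ` s"
proof -
  assume a: "g \<in> carrier G" "h \<in> carrier G" "s \<subseteq> V"
  have "act (g \<otimes>\<^bsub>G\<^esub> h) ` s = (\<lambda>v. act g (act h v)) ` s"
    using act_mult a by (intro image_cong[OF refl]) blast
  then show ?thesis by (simp add: image_image)
qed

lemma acts_inv: "g \<in> carrier G \<Longrightarrow> s \<subseteq> V \<Longrightarrow> act (inv\<^bsub>G\<^esub> g) ` act g ` s = s"
proof -
  assume a: "g \<in> carrier G" "s \<subseteq> V"
  have "act (inv\<^bsub>G\<^esub> g) ` act g ` s = (\<lambda>v. v) ` s"
    unfolding image_image using act_inv a by (intro image_cong[OF refl]) blast
  then show ?thesis by simp
qed

lemma acts_inv2: "g \<in> carrier G \<Longrightarrow> s \<subseteq> V \<Longrightarrow> act g ` act (inv\<^bsub>G\<^esub> g) ` s = s"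
proof -
  assume a: "g \<in> carrier G" "s \<subseteq> V"
  have "act g ` act (inv\<^bsub>G\<^esub> g) ` s = (\<lambda>v. v) ` s"
    unfolding image_image using act_inv2 a by (intro image_cong[OF refl]) blast
  then show ?thesis by simp
qed

lemma inv_cl: "g \<in> carrier G \<Longrightarrow> inv\<^bsub>G\<^esub> g \<in> carrier G"
  using grp by (simp add: group.inv_closed)

lemma mult_cl: "g \<in> carrier G \<Longrightarrow> h \<in> carrier G \<Longrightarrow> g \<otimes>\<^bsub>G\<^esub> h \<in> carrier G"
  using grp by (simp add: group.subgroup_self subgroup.m_closed)

lemma one_cl: "\<one>\<^bsub>G\<^esub> \<in> carrier G"
  using grp by (simp add: group.is_monoid monoid.one_closed)

lemma acts_card: "g \<in> carrier G \<Longrightarrow> s \<subseteq> V \<Longrightarrow> card (act g ` s) = card s"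
  by (meson act_inj card_image inj_on_subset)

lemma acts_cfaces: "g \<in> carrier G \<Longrightarrow> s \<in> cfaces X m \<Longrightarrow> act g ` s \<in> cfaces X m"
  unfolding cfaces_def using act_X acts_card sub_V by auto

lemma acts_stype: "g \<in> carrier G \<Longrightarrow> s \<subseteq> V \<Longrightarrow> stype vtype (act g ` s) = stype vtype s"
proof -
  assume a: "g \<in> carrier G" "s \<subseteq> V"
  have "\<forall>v\<in>s. vtype (act g v) = vtype v" using act_type a by blast
  then show ?thesis unfolding stype_def by auto
qed

lemma orbit_iff: "a \<in> orbit G act s \<longleftrightarrow> (\<exists>g\<in>carrier G. a = act g ` s)"
  unfolding orbit_def by auto

lemma orbit_refl: "s \<subseteq> V \<Longrightarrow> s \<in> orbit G act s"
  unfolding orbit_iff using one_cl acts_one by metis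

lemma orbit_sym: assumes "s \<subseteq> V" "a \<in> orbit G act s" shows "s \<in> orbit G act a"
proof -
  from assms obtain g where g: "g \<in> carrier G" "a = act g ` s" unfolding orbit_iff by auto
  then have "s = act (inv\<^bsub>G\<^esub> g) ` a" using acts_inv assms(1) by auto
  then show ?thesis unfolding orbit_iff using inv_cl g by blast
qed

lemma orbit_trans: assumes "s \<subseteq> V" "a \<in> orbit G act s" "b \<in> orbit G act a" shows "b \<in> orbit G act s"
proof -
  from assms obtain g where g: "g \<in> carrier G" "a = act g ` s" unfolding orbit_iff by auto
  from assms obtain h where h: "h \<in> carrier G" "b = act h ` a" unfolding orbit_iff by auto
  have "b = act (h \<otimes>\<^bsub>G\<^esub> g) ` s" using g h acts_mult assms(1) by auto
  then show ?thesis unfolding orbit_iff using mult_cl g h by auto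
qed

lemma orbit_act: "g \<in> carrier G \<Longrightarrow> act g ` s \<in> orbit G act s"
  unfolding orbit_iff by auto

definition rep :: "'v set set \<Rightarrow> 'v set \<Rightarrow> 'v set" where
  "rep D s = (SOME \<rho>. \<rho> \<in> D \<and> s \<in> orbit G act \<rho>)"

lemma reps_unique:
  assumes "orbit_representatives G act Y D" "Y \<subseteq> X" "\<rho> \<in> D" "\<rho>' \<in> D" "s \<in> orbit G act \<rho>" "s \<in> orbit G act \<rho>'"
  shows "\<rho> = \<rho>'"
proof -
  have sub: "D \<subseteq> X" using assms unfolding orbit_representatives_def by auto
  have "\<rho>' \<in> orbit G act s" using orbit_sym[of \<rho>' s] assms sub sub_V by auto
  then have "\<rho>' \<in> orbit G act \<rho>" using orbit_trans assms sub sub_V by blast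
  then show ?thesis using assms unfolding orbit_representatives_def by auto
qed

lemma rep_props:
  assumes "orbit_representatives G act Y D" "s \<in> Y"
  shows "rep D s \<in> D" "s \<in> orbit G act (rep D s)"
proof -
  have "\<exists>\<rho>. \<rho> \<in> D \<and> s \<in> orbit G act \<rho>" using assms unfolding orbit_representatives_def by auto
  then have "rep D s \<in> D \<and> s \<in> orbit G act (rep D s)" unfolding rep_def by (rule someI_ex)
  then show "rep D s \<in> D" "s \<in> orbit G act (rep D s)" by auto
qed

lemma rep_eq:
  assumes "orbit_representatives G act Y D" "Y \<subseteq> X" "s \<in> Y" "\<rho> \<in> D" "s \<in> orbit G act \<rho>"
  shows "rep D s = \<rho>"
  using reps_unique[OF assms(1,2)] rep_props[OF assms(1,3)] assms(4,5) by blast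

lemma rep_act:
  assumes "orbit_representatives G act (cfaces X m) D" "s \<in> cfaces X m" "g \<in> carrier G"
  shows "rep D (act g ` s) = rep D s"
proof -
  have Y: "cfaces X m \<subseteq> X" unfolding cfaces_def by auto
  have c: "act g ` s \<in> cfaces X m" using acts_cfaces assms by auto
  have r: "rep D s \<in> D" "s \<in> orbit G act (rep D s)" using rep_props[OF assms(1,2)] by auto
  have "rep D s \<in> X" using r(1) assms(1) Y unfolding orbit_representatives_def by auto
  then have "rep D s \<subseteq> V" by auto
  moreover have "act g ` s \<in> orbit G act s" using orbit_act assms(3) .
  ultimately have "act g ` s \<in> orbit G act (rep D s)"
    using orbit_trans[of "rep D s" s "act g ` s"] r(2) by blast
  then show ?thesis using rep_eq[OF assms(1) Y c r(1)] by blast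
qed

lemma rep_self:
  assumes "orbit_representatives G act (cfaces X m) D" "\<rho> \<in> D"
  shows "rep D \<rho> = \<rho>"
proof -
  have Y: "cfaces X m \<subseteq> X" unfolding cfaces_def by auto
  have "\<rho> \<in> cfaces X m" using assms unfolding orbit_representatives_def by auto
  moreover have "\<rho> \<subseteq> V" using \<open>\<rho> \<in> cfaces X m\<close> Y by auto
  ultimately show ?thesis using rep_eq[OF assms(1) Y _ assms(2)] orbit_refl by blast
qed

lemma reps_finite:
  assumes "orbit_representatives G act (cfaces X m) D" shows "finite D"
proof -
  have sub: "D \<subseteq> X" using assms unfolding orbit_representatives_def cfaces_def by blast
  have "inj_on (orbit G act) D"
  proof (rule inj_onI)
    fix a b assume ab: "a \<in> D" "b \<in> D" "orbit G act a = orbit G act b"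
    then have "a \<subseteq> V" using sub by blast
    then have "a \<in> orbit G act b" using orbit_refl ab(3) by metis
    then show "a = b" using assms ab(1,2) unfolding orbit_representatives_def by metis
  qed
  moreover have "orbit G act ` D \<subseteq> orbit G act ` X" using sub by blast
  then have "finite (orbit G act ` D)" using cocompact unfolding cocompact_action_def
    by (rule finite_subset)
  ultimately show ?thesis using finite_imageD by blast
qed

lemma Xn_X: "\<sigma> \<in> Xn \<Longrightarrow> \<sigma> \<in> X" and Xn_card: "\<sigma> \<in> Xn \<Longrightarrow> card \<sigma> = n+1"
  unfolding cfaces_def by auto

lemma Xn_fin: "\<sigma> \<in> Xn \<Longrightarrow> finite \<sigma>" using Xn_X X_fin by blast
lemma Xn_V: "\<sigma> \<in> Xn \<Longrightarrow> \<sigma> \<subseteq> V" using Xn_X by blast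

lemma part1: "\<forall>v\<in>V. vtype v \<le> n" and
   part2: "\<forall>\<sigma>\<in>Xn. \<forall>i\<le>n. \<exists>!v. v \<in> \<sigma> \<and> vtype v = i"
  using part unfolding partite_def by (rule conjunct1, rule conjunct2)

lemma type_le: "v \<in> V \<Longrightarrow> vtype v \<le> n"
  using part1 by (rule bspec)

lemma Xn_ex1: "\<sigma> \<in> Xn \<Longrightarrow> i \<le> n \<Longrightarrow> \<exists>!v. v \<in> \<sigma> \<and> vtype v = i"
  using part2 by simp

lemma Xn_ex: "\<sigma> \<in> Xn \<Longrightarrow> i \<le> n \<Longrightarrow> \<exists>v\<in>\<sigma>. vtype v = i"
  using Xn_ex1 by (metis ex1_implies_ex)

lemma Xn_uniq: assumes "\<sigma> \<in> Xn" "u \<in> \<sigma>" "v \<in> \<sigma>" "vtype u = vtype v" shows "u = v"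
proof -
  have "u \<in> V" using Xn_V assms by blast
  then have "vtype u \<le> n" by (rule type_le)
  then have "\<exists>!w. w \<in> \<sigma> \<and> vtype w = vtype u" using Xn_ex1 assms(1) by simp
  then show ?thesis using assms by (metis (mono_tags))
qed

definition face :: "'v set \<Rightarrow> 'v set" where
  "face \<sigma> = {v\<in>\<sigma>. vtype v \<in> \<nu>}"

lemma face_sub: "face \<sigma> \<subseteq> \<sigma>" unfolding face_def by blast

lemma face_X: "\<sigma> \<in> Xn \<Longrightarrow> face \<sigma> \<in> X" using face_sub Xn_X X_down by blast

lemma face_img: assumes "\<sigma> \<in> Xn" shows "vtype ` face \<sigma> = \<nu>"
proof
  show "vtype ` face \<sigma> \<subseteq> \<nu>" unfolding face_def by blast
  show "\<nu> \<subseteq> vtype ` face \<sigma>"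
  proof
    fix i assume i: "i \<in> \<nu>"
    then have "i \<le> n" using nu by auto
    then obtain v where "v \<in> \<sigma>" "vtype v = i" using Xn_ex assms by blast
    then show "i \<in> vtype ` face \<sigma>" unfolding face_def using i by blast
  qed
qed

lemma stype_img: "stype vtype \<tau> = vtype ` \<tau>" unfolding stype_def by auto

lemma face_stype: "\<sigma> \<in> Xn \<Longrightarrow> stype vtype (face \<sigma>) = \<nu>"
  using face_img by (simp add: stype_img)

lemma face_card: assumes "\<sigma> \<in> Xn" shows "card (face \<sigma>) = n"
proof -
  have "inj_on vtype (face \<sigma>)" using Xn_uniq[OF assms] face_sub by (meson inj_onI subsetD)
  then have "card (face \<sigma>) = card \<nu>" using face_img[OF assms] card_image by fastforce
  then show ?thesis using nu by simp
qed

lemma face_cf: assumes "\<sigma> \<in> Xn" shows "face \<sigma> \<in> cfaces X n"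
  using face_X[OF assms] face_card[OF assms] unfolding cfaces_def by blast

lemma face_unique: assumes "\<sigma> \<in> Xn" "\<tau> \<subseteq> \<sigma>" "stype vtype \<tau> = \<nu>" shows "\<tau> = face \<sigma>"
proof
  show "\<tau> \<subseteq> face \<sigma>" using assms unfolding face_def stype_def by blast
  show "face \<sigma> \<subseteq> \<tau>"
  proof
    fix v assume v: "v \<in> face \<sigma>"
    then have "vtype v \<in> stype vtype \<tau>" using assms(3) unfolding face_def by blast
    then obtain u where u: "u \<in> \<tau>" "vtype u = vtype v" unfolding stype_def by blast
    then have "u = v" using Xn_uniq[OF assms(1)] assms(2) v face_sub by blast
    then show "v \<in> \<tau>" using u by blast
  qed
qed

lemma nu_adj_iff: assumes "\<sigma> \<in> Xn" "\<sigma>' \<in> Xn"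
  shows "nu_adj X vtype \<nu> \<sigma> \<sigma>' \<longleftrightarrow> face \<sigma> = face \<sigma>'"
proof
  assume "nu_adj X vtype \<nu> \<sigma> \<sigma>'"
  then obtain \<tau> where "\<tau> \<subseteq> \<sigma> \<inter> \<sigma>'" "stype vtype \<tau> = \<nu>" unfolding nu_adj_def by blast
  then show "face \<sigma> = face \<sigma>'" using face_unique assms by (metis le_inf_iff)
next
  assume "face \<sigma> = face \<sigma>'"
  then have "face \<sigma> \<subseteq> \<sigma> \<inter> \<sigma>'" using face_sub by (metis le_inf_iff)
  then show "nu_adj X vtype \<nu> \<sigma> \<sigma>'" unfolding nu_adj_def using face_X face_stype assms by blast
qed

lemma face_act: assumes "g \<in> carrier G" "\<sigma> \<in> Xn" shows "face (act g ` \<sigma>) = act g ` face \<sigma>"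
proof -
  have "\<forall>v\<in>\<sigma>. vtype (act g v) = vtype v" using act_type assms Xn_V by blast
  then show ?thesis unfolding face_def by auto
qed

definition Nbr :: "'v set \<Rightarrow> 'v set set" where
  "Nbr t = {\<sigma>\<in>Xn. face \<sigma> = t}"

lemma Nbr_self: "\<sigma> \<in> Xn \<Longrightarrow> \<sigma> \<in> Nbr (face \<sigma>)" unfolding Nbr_def by blast

lemma Nbr_finite: assumes "\<sigma> \<in> Xn" shows "finite (Nbr (face \<sigma>))"
proof -
  let ?t = "face \<sigma>"
  have ct: "card ?t = n" using face_card assms .
  then have "?t \<noteq> {}" using n_pos by auto
  then obtain x where x: "x \<in> ?t" by blast
  let ?\<rho> = "?t - {x}"
  have ft: "finite ?t" using Xn_fin assms face_sub finite_subset by blast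
  have "card ?\<rho> = n - 1" using ct x ft by simp
  moreover have "?\<rho> \<in> X" using face_X assms X_down by blast
  ultimately have "?\<rho> \<in> cfaces X (n - 1)" unfolding cfaces_def by blast
  then have "link_connected_finite_graph X ?\<rho>" using links by blast
  then have fV: "finite {v. {v} \<in> link X ?\<rho>}" unfolding link_connected_finite_graph_def Let_def by blast
  have "Nbr ?t \<subseteq> (\<lambda>v. ?t \<union> {v}) ` {v. {v} \<in> link X ?\<rho>}"
  proof
    fix s assume s: "s \<in> Nbr ?t"
    then have sX: "s \<in> Xn" and fs: "face s = ?t" unfolding Nbr_def by auto
    have "finite s" using Xn_fin sX .
    moreover have "?t \<subseteq> s" using fs face_sub by metis
    ultimately have "card (s - ?t) = 1" using Xn_card[OF sX] ct by (simp add: card_Diff_subset ft)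
    then obtain v where v: "s - ?t = {v}" using card_1_singletonE by blast
    have "s = ?t \<union> {v}" using v \<open>?t \<subseteq> s\<close> by blast
    moreover have "{v} \<in> link X ?\<rho>"
    proof -
      have "{v} \<subseteq> s" "{v} \<union> ?\<rho> \<subseteq> s" using v \<open>?t \<subseteq> s\<close> by blast+
      moreover have "{v} \<inter> ?\<rho> = {}" using v by blast
      ultimately show ?thesis unfolding link_def using X_down Xn_X[OF sX] by blast
    qed
    ultimately show "s \<in> (\<lambda>v. ?t \<union> {v}) ` {v. {v} \<in> link X ?\<rho>}" by blast
  qed
  then show ?thesis using fV finite_subset by blast
qed

lemma Nbr_act: assumes "g \<in> carrier G" "t \<subseteq> V" shows "Nbr (act g ` t) = (\<lambda>s. act g ` s) ` Nbr t"
proof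
  show "(\<lambda>s. act g ` s) ` Nbr t \<subseteq> Nbr (act g ` t)"
    unfolding Nbr_def using acts_cfaces face_act assms(1) by auto
  show "Nbr (act g ` t) \<subseteq> (\<lambda>s. act g ` s) ` Nbr t"
  proof
    fix s' assume s': "s' \<in> Nbr (act g ` t)"
    then have s'X: "s' \<in> Xn" and fs': "face s' = act g ` t" unfolding Nbr_def by auto
    let ?s = "act (inv\<^bsub>G\<^esub> g) ` s'"
    have "?s \<in> Xn" using acts_cfaces inv_cl assms(1) s'X by blast
    moreover have "face ?s = t" using face_act[OF inv_cl[OF assms(1)] s'X] fs' acts_inv assms by simp
    moreover have "s' = act g ` ?s" using acts_inv2 assms(1) Xn_V s'X by simp
    ultimately show "s' \<in> (\<lambda>s. act g ` s) ` Nbr t" unfolding Nbr_def by blast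
  qed
qed

lemma acts_inj_Xn: assumes "g \<in> carrier G" shows "inj_on (\<lambda>s. act g ` s) Xn"
proof (rule inj_onI)
  fix a b assume "a \<in> Xn" "b \<in> Xn" "act g ` a = act g ` b"
  then show "a = b" using acts_inv[OF assms] Xn_V by metis
qed

lemma galg1: "g \<in> carrier G \<Longrightarrow> x \<in> carrier G \<Longrightarrow> g \<otimes>\<^bsub>G\<^esub> (inv\<^bsub>G\<^esub> g \<otimes>\<^bsub>G\<^esub> x) = x"
proof -
  interpret G: group G by (rule grp)
  assume "g \<in> carrier G" "x \<in> carrier G"
  then show ?thesis by (simp add: G.m_assoc[symmetric])
qed

lemma galg2: "g \<in> carrier G \<Longrightarrow> x \<in> carrier G \<Longrightarrow> inv\<^bsub>G\<^esub> g \<otimes>\<^bsub>G\<^esub> (g \<otimes>\<^bsub>G\<^esub> x) = x"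
proof -
  interpret G: group G by (rule grp)
  assume "g \<in> carrier G" "x \<in> carrier G"
  then show ?thesis by (simp add: G.m_assoc[symmetric])
qed

lemma galg3: "g \<in> carrier G \<Longrightarrow> x \<in> carrier G \<Longrightarrow> (x \<otimes>\<^bsub>G\<^esub> inv\<^bsub>G\<^esub> g) \<otimes>\<^bsub>G\<^esub> g = x"
proof -
  interpret G: group G by (rule grp)
  assume "g \<in> carrier G" "x \<in> carrier G"
  then show ?thesis by (simp add: G.m_assoc)
qed

lemma galg4: "g \<in> carrier G \<Longrightarrow> h \<in> carrier G \<Longrightarrow>
   g \<otimes>\<^bsub>G\<^esub> ((inv\<^bsub>G\<^esub> g \<otimes>\<^bsub>G\<^esub> (h \<otimes>\<^bsub>G\<^esub> g)) \<otimes>\<^bsub>G\<^esub> inv\<^bsub>G\<^esub> g) = h"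
proof -
  interpret G: group G by (rule grp)
  assume "g \<in> carrier G" "h \<in> carrier G"
  then show ?thesis using galg1 by (simp add: G.m_assoc)
qed

lemma stab_sub: "stab G act s \<subseteq> carrier G" unfolding stab_def by blast

lemma stab_iff: "h \<in> stab G act s \<longleftrightarrow> h \<in> carrier G \<and> act h ` s = s" unfolding stab_def by blast

lemma one_stab: "s \<subseteq> V \<Longrightarrow> \<one>\<^bsub>G\<^esub> \<in> stab G act s"
  unfolding stab_iff using one_cl acts_one by blast

lemma stab_mult: assumes "s \<subseteq> V" "g \<in> stab G act s" "h \<in> stab G act s"
  shows "g \<otimes>\<^bsub>G\<^esub> h \<in> stab G act s"
  using assms mult_cl acts_mult unfolding stab_iff by metis

lemma ltrans_open: assumes "g \<in> carrier G" "openin T U" shows "openin T ((\<lambda>x. g \<otimes>\<^bsub>G\<^esub> x) ` U)"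
proof -
  have ig: "inv\<^bsub>G\<^esub> g \<in> topspace T" using inv_cl assms top by simp
  have "continuous_map T (prod_topology T T) (\<lambda>x. (inv\<^bsub>G\<^esub> g, x))"
    by (intro continuous_map_pairedI) (simp_all add: ig)
  then have "continuous_map T T ((\<lambda>(x, y). x \<otimes>\<^bsub>G\<^esub> y) \<circ> (\<lambda>x. (inv\<^bsub>G\<^esub> g, x)))"
    using mcont by (rule continuous_map_compose)
  then have c: "continuous_map T T (\<lambda>x. inv\<^bsub>G\<^esub> g \<otimes>\<^bsub>G\<^esub> x)" by (simp add: o_def)
  have U: "U \<subseteq> carrier G" using openin_subset assms(2) top by blast
  have "(\<lambda>x. g \<otimes>\<^bsub>G\<^esub> x) ` U = {x \<in> topspace T. inv\<^bsub>G\<^esub> g \<otimes>\<^bsub>G\<^esub> x \<in> U}"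
  proof
    show "(\<lambda>x. g \<otimes>\<^bsub>G\<^esub> x) ` U \<subseteq> {x \<in> topspace T. inv\<^bsub>G\<^esub> g \<otimes>\<^bsub>G\<^esub> x \<in> U}"
      using U galg2 assms(1) mult_cl top by auto
    show "{x \<in> topspace T. inv\<^bsub>G\<^esub> g \<otimes>\<^bsub>G\<^esub> x \<in> U} \<subseteq> (\<lambda>x. g \<otimes>\<^bsub>G\<^esub> x) ` U"
    proof
      fix x assume x: "x \<in> {x \<in> topspace T. inv\<^bsub>G\<^esub> g \<otimes>\<^bsub>G\<^esub> x \<in> U}"
      then have "x = g \<otimes>\<^bsub>G\<^esub> (inv\<^bsub>G\<^esub> g \<otimes>\<^bsub>G\<^esub> x)" using galg1 assms(1) top by auto
      then show "x \<in> (\<lambda>x. g \<otimes>\<^bsub>G\<^esub> x) ` U" using x by blast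
    qed
  qed
  then show ?thesis using openin_continuous_map_preimage[OF c assms(2)] by simp
qed

lemma rtrans_open: assumes "g \<in> carrier G" "openin T U" shows "openin T ((\<lambda>x. x \<otimes>\<^bsub>G\<^esub> inv\<^bsub>G\<^esub> g) ` U)"
proof -
  have ig: "g \<in> topspace T" using assms top by simp
  have "continuous_map T (prod_topology T T) (\<lambda>x. (x, g))"
    by (intro continuous_map_pairedI) (simp_all add: ig)
  then have "continuous_map T T ((\<lambda>(x, y). x \<otimes>\<^bsub>G\<^esub> y) \<circ> (\<lambda>x. (x, g)))"
    using mcont by (rule continuous_map_compose)
  then have c: "continuous_map T T (\<lambda>x. x \<otimes>\<^bsub>G\<^esub> g)" by (simp add: o_def)
  have U: "U \<subseteq> carrier G" using openin_subset assms(2) top by blast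
  have "(\<lambda>x. x \<otimes>\<^bsub>G\<^esub> inv\<^bsub>G\<^esub> g) ` U = {x \<in> topspace T. x \<otimes>\<^bsub>G\<^esub> g \<in> U}"
  proof
    show "(\<lambda>x. x \<otimes>\<^bsub>G\<^esub> inv\<^bsub>G\<^esub> g) ` U \<subseteq> {x \<in> topspace T. x \<otimes>\<^bsub>G\<^esub> g \<in> U}"
      using U galg3 assms(1) mult_cl inv_cl top by auto
    show "{x \<in> topspace T. x \<otimes>\<^bsub>G\<^esub> g \<in> U} \<subseteq> (\<lambda>x. x \<otimes>\<^bsub>G\<^esub> inv\<^bsub>G\<^esub> g) ` U"
    proof
      fix x assume x: "x \<in> {x \<in> topspace T. x \<otimes>\<^bsub>G\<^esub> g \<in> U}"
      then have "x = (x \<otimes>\<^bsub>G\<^esub> g) \<otimes>\<^bsub>G\<^esub> inv\<^bsub>G\<^esub> g"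
        using galg3[of "inv\<^bsub>G\<^esub> g" x] assms(1) top grp by (auto simp: group.inv_inv inv_cl)
      then show "x \<in> (\<lambda>x. x \<otimes>\<^bsub>G\<^esub> inv\<^bsub>G\<^esub> g) ` U" using x by blast
    qed
  qed
  then show ?thesis using openin_continuous_map_preimage[OF c assms(2)] by simp
qed

lemma lhaar: "left_haar_measure G T \<mu>" using haar unfolding unimodular_haar_def by blast

lemma open_sets: assumes "openin T U" shows "U \<in> sets \<mu>"
proof -
  have "Collect (openin T) \<subseteq> Pow (topspace T)" using openin_subset by blast
  then have "sets (sigma (topspace T) (Collect (openin T))) = sigma_sets (topspace T) (Collect (openin T))"
    by (rule sets_measure_of)
  moreover have "sets \<mu> = sets (sigma (topspace T) (Collect (openin T)))"
    using lhaar unfolding left_haar_measure_def by (elim conjE) assumption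
  ultimately show ?thesis using assms by auto
qed

lemma linv0: "\<forall>g\<in>carrier G. \<forall>A\<in>sets \<mu>. emeasure \<mu> ((\<lambda>x. g \<otimes>\<^bsub>G\<^esub> x) ` A) = emeasure \<mu> A"
  using lhaar unfolding left_haar_measure_def by (elim conjE) assumption

lemma linv: "g \<in> carrier G \<Longrightarrow> A \<in> sets \<mu> \<Longrightarrow> emeasure \<mu> ((\<lambda>x. g \<otimes>\<^bsub>G\<^esub> x) ` A) = emeasure \<mu> A"
  using linv0 by simp

lemma rinv0: "\<forall>g\<in>carrier G. \<forall>A\<in>sets \<mu>. emeasure \<mu> ((\<lambda>x. x \<otimes>\<^bsub>G\<^esub> g) ` A) = emeasure \<mu> A"
  using haar unfolding unimodular_haar_def by (elim conjE) assumption

lemma rinv: "g \<in> carrier G \<Longrightarrow> A \<in> sets \<mu> \<Longrightarrow> emeasure \<mu> ((\<lambda>x. x \<otimes>\<^bsub>G\<^esub> g) ` A) = emeasure \<mu> A"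
  using rinv0 by simp

lemma cpt_fin0: "\<forall>C. compactin T C \<longrightarrow> emeasure \<mu> C < \<infinity>"
  using lhaar unfolding left_haar_measure_def by (elim conjE) assumption

lemma cpt_fin: "compactin T C \<Longrightarrow> emeasure \<mu> C < \<infinity>"
  using cpt_fin0 by simp

lemma open_pos0: "\<forall>U. openin T U \<and> U \<noteq> {} \<longrightarrow> emeasure \<mu> U > 0"
  using lhaar unfolding left_haar_measure_def by (elim conjE) assumption

lemma open_pos: "openin T U \<Longrightarrow> U \<noteq> {} \<Longrightarrow> emeasure \<mu> U > 0"
  using open_pos0 by simp

definition w :: "'v set \<Rightarrow> real" where "w s = measure \<mu> (stab G act s)"

lemma stab_oc: assumes "s \<in> cfaces X n \<union> Xn"
  shows "openin T (stab G act s)" "compactin T (stab G act s)"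
  using soc assms by auto

lemma cf_V: "s \<in> cfaces X m \<Longrightarrow> s \<subseteq> V" unfolding cfaces_def by blast

lemma w_pos: assumes "s \<in> cfaces X n \<union> Xn" shows "w s > 0"
proof -
  have "s \<subseteq> V" using assms cf_V by blast
  then have "stab G act s \<noteq> {}" using one_stab by blast
  then have "emeasure \<mu> (stab G act s) > 0" using open_pos stab_oc[OF assms] by blast
  moreover have "emeasure \<mu> (stab G act s) < \<infinity>" using cpt_fin stab_oc[OF assms] by blast
  ultimately show ?thesis unfolding w_def measure_def by (simp add: enn2real_positive_iff)
qed

lemma w_conj: assumes g: "g \<in> carrier G" and s: "s \<in> cfaces X n \<union> Xn"
  shows "w (act g ` s) = w s"
proof -
  let ?S = "stab G act s"
  have sV: "s \<subseteq> V" using s cf_V by blast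
  have gsV: "act g ` s \<subseteq> V" using acts_V g sV by blast
  have eq: "stab G act (act g ` s) = (\<lambda>x. g \<otimes>\<^bsub>G\<^esub> x) ` ((\<lambda>x. x \<otimes>\<^bsub>G\<^esub> inv\<^bsub>G\<^esub> g) ` ?S)"
  proof
    show "stab G act (act g ` s) \<subseteq> (\<lambda>x. g \<otimes>\<^bsub>G\<^esub> x) ` ((\<lambda>x. x \<otimes>\<^bsub>G\<^esub> inv\<^bsub>G\<^esub> g) ` ?S)"
    proof
      fix h assume h: "h \<in> stab G act (act g ` s)"
      then have hc: "h \<in> carrier G" and ha: "act h ` act g ` s = act g ` s" unfolding stab_iff by auto
      let ?k = "inv\<^bsub>G\<^esub> g \<otimes>\<^bsub>G\<^esub> (h \<otimes>\<^bsub>G\<^esub> g)"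
      have kc: "?k \<in> carrier G" using hc g mult_cl inv_cl by blast
      have "act ?k ` s = act (inv\<^bsub>G\<^esub> g) ` act (h \<otimes>\<^bsub>G\<^esub> g) ` s"
        by (rule acts_mult[OF inv_cl[OF g] mult_cl[OF hc g] sV])
      also have "\<dots> = act (inv\<^bsub>G\<^esub> g) ` act h ` act g ` s" using acts_mult hc g sV by simp
      also have "\<dots> = s" using ha acts_inv g sV by simp
      finally have "?k \<in> ?S" using kc unfolding stab_iff by blast
      moreover have "h = g \<otimes>\<^bsub>G\<^esub> (?k \<otimes>\<^bsub>G\<^esub> inv\<^bsub>G\<^esub> g)" using galg4 g hc by simp
      ultimately show "h \<in> (\<lambda>x. g \<otimes>\<^bsub>G\<^esub> x) ` ((\<lambda>x. x \<otimes>\<^bsub>G\<^esub> inv\<^bsub>G\<^esub> g) ` ?S)" by blast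
    qed
    show "(\<lambda>x. g \<otimes>\<^bsub>G\<^esub> x) ` ((\<lambda>x. x \<otimes>\<^bsub>G\<^esub> inv\<^bsub>G\<^esub> g) ` ?S) \<subseteq> stab G act (act g ` s)"
    proof
      fix h assume "h \<in> (\<lambda>x. g \<otimes>\<^bsub>G\<^esub> x) ` ((\<lambda>x. x \<otimes>\<^bsub>G\<^esub> inv\<^bsub>G\<^esub> g) ` ?S)"
      then obtain k where k: "k \<in> ?S" and h: "h = g \<otimes>\<^bsub>G\<^esub> (k \<otimes>\<^bsub>G\<^esub> inv\<^bsub>G\<^esub> g)" by blast
      have kc: "k \<in> carrier G" and ka: "act k ` s = s" using k unfolding stab_iff by auto
      have ic: "inv\<^bsub>G\<^esub> g \<in> carrier G" using inv_cl g .
      have hc: "h \<in> carrier G" using h kc ic g mult_cl by blast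
      have "act h ` act g ` s = act g ` act (k \<otimes>\<^bsub>G\<^esub> inv\<^bsub>G\<^esub> g) ` act g ` s"
        using h acts_mult g kc ic mult_cl gsV by simp
      also have "\<dots> = act g ` act k ` act (inv\<^bsub>G\<^esub> g) ` act g ` s"
        using acts_mult kc ic gsV by simp
      also have "\<dots> = act g ` s" using acts_inv g sV ka by simp
      finally show "h \<in> stab G act (act g ` s)" using hc unfolding stab_iff by blast
    qed
  qed
  have o1: "openin T ((\<lambda>x. x \<otimes>\<^bsub>G\<^esub> inv\<^bsub>G\<^esub> g) ` ?S)" using rtrans_open g stab_oc(1)[OF s] by blast
  have "emeasure \<mu> (stab G act (act g ` s)) = emeasure \<mu> ((\<lambda>x. x \<otimes>\<^bsub>G\<^esub> inv\<^bsub>G\<^esub> g) ` ?S)"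
    unfolding eq by (rule linv[OF g open_sets[OF o1]])
  also have "\<dots> = emeasure \<mu> ?S" by (rule rinv[OF inv_cl[OF g] open_sets[OF stab_oc(1)[OF s]]])
  finally show ?thesis unfolding w_def measure_def by simp
qed

definition orbH :: "'v set \<Rightarrow> 'v set \<Rightarrow> 'v set set" where
  "orbH t \<sigma> = (\<lambda>h. act h ` \<sigma>) ` stab G act t"

lemma stab_face: assumes "\<sigma> \<in> Xn" shows "stab G act \<sigma> \<subseteq> stab G act (face \<sigma>)"
proof
  fix g assume "g \<in> stab G act \<sigma>"
  then have g: "g \<in> carrier G" "act g ` \<sigma> = \<sigma>" unfolding stab_iff by auto
  then have "act g ` face \<sigma> = face \<sigma>" using face_act[OF g(1) assms] by simp
  then show "g \<in> stab G act (face \<sigma>)" using g(1) unfolding stab_iff by blast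
qed

lemma orbH_sub: assumes "\<sigma> \<in> Xn" shows "orbH (face \<sigma>) \<sigma> \<subseteq> Nbr (face \<sigma>)"
proof
  fix s assume "s \<in> orbH (face \<sigma>) \<sigma>"
  then obtain h where h: "h \<in> stab G act (face \<sigma>)" "s = act h ` \<sigma>" unfolding orbH_def by blast
  then have hc: "h \<in> carrier G" and ha: "act h ` face \<sigma> = face \<sigma>" unfolding stab_iff by auto
  have "s \<in> Xn" using h(2) acts_cfaces[OF hc assms] by simp
  moreover have "face s = face \<sigma>" using h(2) face_act[OF hc assms] ha by simp
  ultimately show "s \<in> Nbr (face \<sigma>)" unfolding Nbr_def by blast
qed

lemma index: assumes sX: "\<sigma> \<in> Xn"
  shows "real (card (orbH (face \<sigma>) \<sigma>)) * w \<sigma> = w (face \<sigma>)"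
proof -
  let ?t = "face \<sigma>"
  let ?H = "stab G act ?t" and ?L = "stab G act \<sigma>" and ?O = "orbH ?t \<sigma>"
  define C where "C = (\<lambda>s. {h\<in>?H. act h ` \<sigma> = s})"
  have sV: "\<sigma> \<subseteq> V" using Xn_V sX .
  have LH: "?L \<subseteq> ?H" using stab_face sX .
  have fO: "finite ?O" using orbH_sub[OF sX] Nbr_finite[OF sX] finite_subset by blast
  have tcf: "?t \<in> cfaces X n \<union> Xn" using face_cf sX by blast
  have scf: "\<sigma> \<in> cfaces X n \<union> Xn" using sX by blast
  have tV: "?t \<subseteq> V" using face_sub sV by blast
  have Hun: "?H = (\<Union>s\<in>?O. C s)" unfolding C_def orbH_def by blast
  have disj: "disjoint_family_on C ?O" unfolding disjoint_family_on_def C_def by blast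
  have Ceq: "C s = (\<lambda>x. h0 \<otimes>\<^bsub>G\<^esub> x) ` ?L" if h0: "h0 \<in> ?H" and s: "s = act h0 ` \<sigma>" for s h0
  proof
    have h0c: "h0 \<in> carrier G" using h0 stab_sub by blast
    show "C s \<subseteq> (\<lambda>x. h0 \<otimes>\<^bsub>G\<^esub> x) ` ?L"
    proof
      fix h assume "h \<in> C s"
      then have hH: "h \<in> ?H" and ha: "act h ` \<sigma> = act h0 ` \<sigma>" unfolding C_def s by auto
      have hc: "h \<in> carrier G" using hH stab_sub by blast
      let ?l = "inv\<^bsub>G\<^esub> h0 \<otimes>\<^bsub>G\<^esub> h"
      have lc: "?l \<in> carrier G" using mult_cl[OF inv_cl[OF h0c] hc] .
      have "act ?l ` \<sigma> = act (inv\<^bsub>G\<^esub> h0) ` act h ` \<sigma>" by (rule acts_mult[OF inv_cl[OF h0c] hc sV])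
      also have "\<dots> = \<sigma>" unfolding ha by (rule acts_inv[OF h0c sV])
      finally have "?l \<in> ?L" using lc unfolding stab_iff by blast
      moreover have "h = h0 \<otimes>\<^bsub>G\<^esub> ?l" using galg1[OF h0c hc] by simp
      ultimately show "h \<in> (\<lambda>x. h0 \<otimes>\<^bsub>G\<^esub> x) ` ?L" by blast
    qed
    show "(\<lambda>x. h0 \<otimes>\<^bsub>G\<^esub> x) ` ?L \<subseteq> C s"
    proof
      fix h assume "h \<in> (\<lambda>x. h0 \<otimes>\<^bsub>G\<^esub> x) ` ?L"
      then obtain l where l: "l \<in> ?L" "h = h0 \<otimes>\<^bsub>G\<^esub> l" by blast
      have lc: "l \<in> carrier G" and la: "act l ` \<sigma> = \<sigma>" using l(1) unfolding stab_iff by auto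
      have "h \<in> ?H" using l(2) stab_mult[OF tV h0] l(1) LH by blast
      moreover have "act h ` \<sigma> = act h0 ` \<sigma>" using l(2) acts_mult[OF h0c lc sV] la by simp
      ultimately show "h \<in> C s" unfolding C_def s by blast
    qed
  qed
  have Copen: "openin T (C s)" and Cmeas: "emeasure \<mu> (C s) = emeasure \<mu> ?L" if "s \<in> ?O" for s
  proof -
    obtain h0 where h0: "h0 \<in> ?H" "s = act h0 ` \<sigma>" using \<open>s \<in> ?O\<close> unfolding orbH_def by blast
    have h0c: "h0 \<in> carrier G" using h0 stab_sub by blast
    show "openin T (C s)" unfolding Ceq[OF h0] by (rule ltrans_open[OF h0c stab_oc(1)[OF scf]])
    show "emeasure \<mu> (C s) = emeasure \<mu> ?L" unfolding Ceq[OF h0]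
      by (rule linv[OF h0c open_sets[OF stab_oc(1)[OF scf]]])
  qed
  have Lfin: "emeasure \<mu> ?L \<noteq> \<infinity>" using cpt_fin[OF stab_oc(2)[OF scf]] by simp
  have "w ?t = measure \<mu> (\<Union>s\<in>?O. C s)" unfolding w_def using Hun by simp
  also have "\<dots> = (\<Sum>s\<in>?O. measure \<mu> (C s))"
  proof (rule measure_finite_Union[OF fO])
    show "C ` ?O \<subseteq> sets \<mu>" using Copen open_sets by blast
    show "disjoint_family_on C ?O" by (rule disj)
    show "\<And>i. i \<in> ?O \<Longrightarrow> emeasure \<mu> (C i) \<noteq> \<infinity>" using Cmeas Lfin by simp
  qed
  also have "\<dots> = (\<Sum>s\<in>?O. w \<sigma>)" unfolding w_def measure_def using Cmeas by simp
  also have "\<dots> = real (card ?O) * w \<sigma>" by simp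
  finally show ?thesis by simp
qed

definition E :: "'v set set" where "E = {t\<in>Dn1. stype vtype t = \<nu>}"

lemma D1_sub: "Dn1 \<subseteq> cfaces X n" using D1 unfolding orbit_representatives_def by blast
lemma D0_sub: "Dn \<subseteq> Xn" using D0 unfolding orbit_representatives_def by blast

lemma E_fin: "finite E"
  using reps_finite[OF D1] unfolding E_def by simp

lemma E_face: assumes "t \<in> E" shows "\<exists>\<sigma>\<in>Xn. t = face \<sigma>"
proof -
  have tc: "t \<in> cfaces X n" and ts: "stype vtype t = \<nu>" using assms D1_sub unfolding E_def by auto
  then have "t \<in> X" unfolding cfaces_def by blast
  then obtain \<sigma> where "\<sigma> \<in> Xn" "t \<subseteq> \<sigma>" using pure unfolding pure_dim_def by blast
  then show ?thesis using face_unique ts by blast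
qed

lemma E_Nbr_fin: "t \<in> E \<Longrightarrow> finite (Nbr t)" using E_face Nbr_finite by blast

lemma E_Nbr_ne: "t \<in> E \<Longrightarrow> Nbr t \<noteq> {}" using E_face Nbr_self by blast

lemma E_w_pos: "t \<in> E \<Longrightarrow> w t > 0" using w_pos D1_sub unfolding E_def by blast

lemma orbit_sum:
  fixes F :: "'v set \<Rightarrow> real"
  assumes Finv: "\<And>g \<sigma>. g \<in> carrier G \<Longrightarrow> \<sigma> \<in> Xn \<Longrightarrow> F (act g ` \<sigma>) = F \<sigma>"
  shows "(\<Sum>\<sigma>\<in>Dn. F \<sigma> / w \<sigma>) = (\<Sum>t\<in>E. (\<Sum>\<sigma>\<in>Nbr t. F \<sigma>) / w t)"
proof -
  define S where "S = (\<Union>t\<in>E. Nbr t)"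
  let ?r = "rep Dn"
  have fS: "finite S" unfolding S_def using E_fin E_Nbr_fin by blast
  have fD: "finite Dn" using reps_finite[OF D0] .
  have "(\<Sum>t\<in>E. (\<Sum>\<sigma>\<in>Nbr t. F \<sigma>) / w t) = (\<Sum>t\<in>E. (\<Sum>\<sigma>\<in>Nbr t. F \<sigma> / w (face \<sigma>)))"
  proof (rule sum.cong[OF refl])
    fix t assume "t \<in> E"
    have "(\<Sum>\<sigma>\<in>Nbr t. F \<sigma>) / w t = (\<Sum>\<sigma>\<in>Nbr t. F \<sigma> / w t)" by (rule sum_divide_distrib)
    also have "\<dots> = (\<Sum>\<sigma>\<in>Nbr t. F \<sigma> / w (face \<sigma>))" by (rule sum.cong) (auto simp: Nbr_def)
    finally show "(\<Sum>\<sigma>\<in>Nbr t. F \<sigma>) / w t = (\<Sum>\<sigma>\<in>Nbr t. F \<sigma> / w (face \<sigma>))" .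
  qed
  also have "\<dots> = (\<Sum>\<sigma>\<in>S. F \<sigma> / w (face \<sigma>))" unfolding S_def
    by (rule sum.UNION_disjoint[symmetric, OF E_fin]) (use E_Nbr_fin in blast, auto simp: Nbr_def)
  also have "\<dots> = (\<Sum>\<rho>\<in>Dn. (\<Sum>\<sigma>\<in>{\<sigma>\<in>S. ?r \<sigma> = \<rho>}. F \<sigma> / w (face \<sigma>)))"
  proof (rule sum.group[symmetric, OF fS fD])
    show "?r ` S \<subseteq> Dn"
    proof
      fix x assume "x \<in> ?r ` S"
      then obtain \<sigma> where "\<sigma> \<in> S" "x = ?r \<sigma>" by blast
      then have "\<sigma> \<in> Xn" unfolding S_def Nbr_def by blast
      then show "x \<in> Dn" using rep_props(1)[OF D0] \<open>x = ?r \<sigma>\<close> by blast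
    qed
  qed
  also have "\<dots> = (\<Sum>\<rho>\<in>Dn. F \<rho> / w \<rho>)"
  proof (rule sum.cong[OF refl])
    fix \<rho> assume \<rho>D: "\<rho> \<in> Dn"
    have \<rho>X: "\<rho> \<in> Xn" using \<rho>D D0_sub by blast
    have \<rho>V: "\<rho> \<subseteq> V" using Xn_V \<rho>X .
    have fc: "face \<rho> \<in> cfaces X n" using face_cf \<rho>X .
    obtain t0 where t0: "t0 \<in> Dn1" "face \<rho> \<in> orbit G act t0"
      using D1 fc unfolding orbit_representatives_def by blast
    obtain g where g: "g \<in> carrier G" "face \<rho> = act g ` t0" using t0(2) unfolding orbit_iff by blast
    have t0V: "t0 \<subseteq> V" using t0(1) D1_sub cf_V by blast
    have t0E: "t0 \<in> E" unfolding E_def using t0(1) acts_stype[OF g(1) t0V] g(2) face_stype[OF \<rho>X] by simp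
    define \<sigma>1 where "\<sigma>1 = act (inv\<^bsub>G\<^esub> g) ` \<rho>"
    have ig: "inv\<^bsub>G\<^esub> g \<in> carrier G" using inv_cl g(1) .
    have \<sigma>1X: "\<sigma>1 \<in> Xn" unfolding \<sigma>1_def using acts_cfaces[OF ig \<rho>X] .
    have \<sigma>1V: "\<sigma>1 \<subseteq> V" using Xn_V \<sigma>1X .
    have f\<sigma>1: "face \<sigma>1 = t0" unfolding \<sigma>1_def face_act[OF ig \<rho>X] g(2) using acts_inv[OF g(1) t0V] .
    have \<rho>eq: "\<rho> = act g ` \<sigma>1" unfolding \<sigma>1_def using acts_inv2[OF g(1) \<rho>V] by simp
    have r\<rho>: "?r \<rho> = \<rho>" using rep_self[OF D0 \<rho>D] .
    have setq: "{\<sigma>\<in>S. ?r \<sigma> = \<rho>} = orbH t0 \<sigma>1"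
    proof
      show "orbH t0 \<sigma>1 \<subseteq> {\<sigma>\<in>S. ?r \<sigma> = \<rho>}"
      proof
        fix \<sigma> assume "\<sigma> \<in> orbH t0 \<sigma>1"
        then obtain h where h: "h \<in> stab G act t0" "\<sigma> = act h ` \<sigma>1" unfolding orbH_def by blast
        have hc: "h \<in> carrier G" and ha: "act h ` t0 = t0" using h(1) unfolding stab_iff by auto
        have \<sigma>X: "\<sigma> \<in> Xn" using h(2) acts_cfaces[OF hc \<sigma>1X] by simp
        have "face \<sigma> = t0" using h(2) face_act[OF hc \<sigma>1X] f\<sigma>1 ha by simp
        then have "\<sigma> \<in> S" unfolding S_def Nbr_def using \<sigma>X t0E by blast
        moreover have "?r \<sigma> = \<rho>"
        proof -
          have "?r \<sigma> = ?r \<sigma>1" using h(2) rep_act[OF D0 \<sigma>1X hc] by simp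
          also have "\<dots> = ?r \<rho>" using \<rho>eq rep_act[OF D0 \<sigma>1X g(1)] by simp
          finally show ?thesis using r\<rho> by simp
        qed
        ultimately show "\<sigma> \<in> {\<sigma>\<in>S. ?r \<sigma> = \<rho>}" by blast
      qed
      show "{\<sigma>\<in>S. ?r \<sigma> = \<rho>} \<subseteq> orbH t0 \<sigma>1"
      proof
        fix \<sigma> assume "\<sigma> \<in> {\<sigma>\<in>S. ?r \<sigma> = \<rho>}"
        then have \<sigma>S: "\<sigma> \<in> S" and r\<sigma>: "?r \<sigma> = \<rho>" by auto
        then obtain t' where t': "t' \<in> E" "\<sigma> \<in> Nbr t'" unfolding S_def by blast
        then have \<sigma>X: "\<sigma> \<in> Xn" and ft': "face \<sigma> = t'" unfolding Nbr_def by auto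
        have "\<sigma> \<in> orbit G act \<rho>" using rep_props(2)[OF D0 \<sigma>X] r\<sigma> by simp
        then obtain k where k: "k \<in> carrier G" "\<sigma> = act k ` \<rho>" unfolding orbit_iff by blast
        have kg: "k \<otimes>\<^bsub>G\<^esub> g \<in> carrier G" using mult_cl[OF k(1) g(1)] .
        have \<sigma>eq: "\<sigma> = act (k \<otimes>\<^bsub>G\<^esub> g) ` \<sigma>1" using k(2) \<rho>eq acts_mult[OF k(1) g(1) \<sigma>1V] by simp
        have f\<sigma>: "face \<sigma> = act (k \<otimes>\<^bsub>G\<^esub> g) ` t0" using \<sigma>eq face_act[OF kg \<sigma>1X] f\<sigma>1 by simp
        have "face \<sigma> \<in> orbit G act t0" using f\<sigma> orbit_act[OF kg] by simp
        moreover have "face \<sigma> \<in> orbit G act (face \<sigma>)" using orbit_refl face_sub Xn_V[OF \<sigma>X] by blast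
        moreover have "face \<sigma> \<in> Dn1" using t'(1) ft' unfolding E_def by simp
        moreover have "cfaces X n \<subseteq> X" unfolding cfaces_def by blast
        ultimately have "t0 = face \<sigma>" using reps_unique[OF D1 _ t0(1)] by blast
        then have "k \<otimes>\<^bsub>G\<^esub> g \<in> stab G act t0" using f\<sigma> kg unfolding stab_iff by simp
        then show "\<sigma> \<in> orbH t0 \<sigma>1" unfolding orbH_def using \<sigma>eq by blast
      qed
    qed
    have Fc: "F \<sigma> / w (face \<sigma>) = F \<rho> / w t0" if H: "\<sigma> \<in> orbH t0 \<sigma>1" for \<sigma>
    proof -
      obtain h where h: "h \<in> stab G act t0" "\<sigma> = act h ` \<sigma>1" using H unfolding orbH_def by blast
      have hc: "h \<in> carrier G" and ha: "act h ` t0 = t0" using h(1) unfolding stab_iff by auto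
      have "face \<sigma> = t0" using h(2) face_act[OF hc \<sigma>1X] f\<sigma>1 ha by simp
      moreover have "F \<sigma> = F \<sigma>1" using h(2) Finv[OF hc \<sigma>1X] by simp
      moreover have "F \<rho> = F \<sigma>1" using \<rho>eq Finv[OF g(1) \<sigma>1X] by simp
      ultimately show ?thesis by simp
    qed
    have idx: "real (card (orbH t0 \<sigma>1)) * w \<sigma>1 = w t0" using index[OF \<sigma>1X] f\<sigma>1 by simp
    have w\<sigma>1: "w \<sigma>1 = w \<rho>" using \<rho>eq w_conj[OF g(1)] \<sigma>1X by simp
    have wpos: "w \<rho> > 0" using w_pos \<rho>X by blast
    have "(\<Sum>\<sigma>\<in>{\<sigma>\<in>S. ?r \<sigma> = \<rho>}. F \<sigma> / w (face \<sigma>)) = (\<Sum>\<sigma>\<in>orbH t0 \<sigma>1. F \<rho> / w t0)"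
      unfolding setq using Fc by (rule sum.cong[OF refl])
    also have "\<dots> = real (card (orbH t0 \<sigma>1)) * (F \<rho> / w t0)" by simp
    also have "\<dots> = F \<rho> / w \<rho>" using idx w\<sigma>1 wpos E_w_pos[OF t0E] by (auto simp: field_simps)
    finally show "(\<Sum>\<sigma>\<in>{\<sigma>\<in>S. ?r \<sigma> = \<rho>}. F \<sigma> / w (face \<sigma>)) = F \<rho> / w \<rho>" .
  qed
  finally show ?thesis by simp
qed

lemma P_eq: assumes "\<sigma> \<in> Xn"
  shows "P_op X n vtype \<nu> \<phi> \<sigma> = (1 / real (card (Nbr (face \<sigma>)))) *\<^sub>R (\<Sum>\<sigma>'\<in>Nbr (face \<sigma>). \<phi> \<sigma>')"
proof -
  have "{\<sigma>'\<in>Xn. nu_adj X vtype \<nu> \<sigma> \<sigma>'} = Nbr (face \<sigma>)"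
    unfolding Nbr_def using nu_adj_iff[OF assms] by auto
  then show ?thesis unfolding P_op_def using assms by (simp add: Let_def)
qed

lemma main_ineq:
  assumes phi: "\<phi> \<in> equivariant_maps G act X n \<pi>"
    and cK: "\<And>g. g \<in> Kset G act n Dn \<Longrightarrow> (norm (\<pi> g))\<^sup>2 \<le> c"
  shows "(\<Sum>\<sigma>\<in>Dn. (norm (P_op X n vtype \<nu> \<phi> \<sigma>))\<^sup>2 / w \<sigma>) \<le> c * (\<Sum>\<sigma>\<in>Dn. (norm (\<phi> \<sigma>))\<^sup>2 / w \<sigma>)"
proof -
  have eqv: "\<And>g \<sigma>. g \<in> carrier G \<Longrightarrow> \<sigma> \<in> Xn \<Longrightarrow> \<phi> (act g ` \<sigma>) = \<pi> g (\<phi> \<sigma>)"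
    using phi unfolding equivariant_maps_def by blast
  define F where "F = (\<lambda>\<sigma>. (norm (\<phi> (rep Dn \<sigma>)))\<^sup>2)"
  define A where "A = (\<lambda>\<sigma>. (\<Sum>\<sigma>'\<in>Nbr (face \<sigma>). F \<sigma>') / real (card (Nbr (face \<sigma>))))"
  have Finv: "F (act g ` \<sigma>) = F \<sigma>" if "g \<in> carrier G" "\<sigma> \<in> Xn" for g \<sigma>
    unfolding F_def using rep_act[OF D0 that(2,1)] by simp
  have Ainv: "A (act g ` \<sigma>) = A \<sigma>" if g: "g \<in> carrier G" and sX: "\<sigma> \<in> Xn" for g \<sigma>
  proof -
    have fV: "face \<sigma> \<subseteq> V" using face_sub Xn_V[OF sX] by blast
    have N: "Nbr (face (act g ` \<sigma>)) = (\<lambda>s. act g ` s) ` Nbr (face \<sigma>)"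
      unfolding face_act[OF g sX] by (rule Nbr_act[OF g fV])
    have inj: "inj_on (\<lambda>s. act g ` s) (Nbr (face \<sigma>))"
      using acts_inj_Xn[OF g] by (rule inj_on_subset) (auto simp: Nbr_def)
    have "(\<Sum>\<sigma>'\<in>Nbr (face (act g ` \<sigma>)). F \<sigma>') = (\<Sum>\<sigma>'\<in>Nbr (face \<sigma>). F (act g ` \<sigma>'))"
      unfolding N by (rule sum.reindex[OF inj, unfolded o_def])
    also have "\<dots> = (\<Sum>\<sigma>'\<in>Nbr (face \<sigma>). F \<sigma>')"
      by (rule sum.cong[OF refl]) (auto simp: Nbr_def Finv[OF g])
    finally show ?thesis unfolding A_def N card_image[OF inj] by simp
  qed
  have phib: "(norm (\<phi> \<sigma>'))\<^sup>2 \<le> c * F \<sigma>'" if sD: "\<sigma> \<in> Dn" and s': "\<sigma>' \<in> Nbr (face \<sigma>)" for \<sigma> \<sigma>'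
  proof -
    have sX: "\<sigma> \<in> Xn" using sD D0_sub by blast
    have s'X: "\<sigma>' \<in> Xn" and fs': "face \<sigma>' = face \<sigma>" using s' unfolding Nbr_def by auto
    let ?\<rho> = "rep Dn \<sigma>'"
    have \<rho>D: "?\<rho> \<in> Dn" and \<rho>o: "\<sigma>' \<in> orbit G act ?\<rho>" using rep_props[OF D0 s'X] by auto
    have \<rho>X: "?\<rho> \<in> Xn" using \<rho>D D0_sub by blast
    obtain g where g: "g \<in> carrier G" "\<sigma>' = act g ` ?\<rho>" using \<rho>o unfolding orbit_iff by blast
    have pe: "\<phi> \<sigma>' = \<pi> g (\<phi> ?\<rho>)" using eqv[OF g(1) \<rho>X] g(2) by simp
    have "face \<sigma> \<subseteq> act g ` ?\<rho> \<inter> \<sigma>" using face_sub[of \<sigma>'] face_sub[of \<sigma>] fs' g(2) by auto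
    moreover have "finite (act g ` ?\<rho> \<inter> \<sigma>)" using Xn_fin[OF sX] by simp
    ultimately have "card (face \<sigma>) \<le> card (act g ` ?\<rho> \<inter> \<sigma>)" by (rule card_mono[rotated])
    then have "n - 1 \<le> card (act g ` ?\<rho> \<inter> \<sigma>)" using face_card[OF sX] by simp
    then have "g \<in> Kset G act n Dn" unfolding Kset_def using g(1) \<rho>D sD by blast
    then have gc: "(norm (\<pi> g))\<^sup>2 \<le> c" by (rule cK)
    have "norm (\<phi> \<sigma>') \<le> norm (\<pi> g) * norm (\<phi> ?\<rho>)" unfolding pe by (rule norm_blinfun)
    then have "(norm (\<phi> \<sigma>'))\<^sup>2 \<le> (norm (\<pi> g) * norm (\<phi> ?\<rho>))\<^sup>2"
      by (rule power_mono) simp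
    also have "\<dots> = (norm (\<pi> g))\<^sup>2 * (norm (\<phi> ?\<rho>))\<^sup>2" by (simp add: power_mult_distrib)
    also have "\<dots> \<le> c * (norm (\<phi> ?\<rho>))\<^sup>2" by (rule mult_right_mono[OF gc]) simp
    finally show ?thesis unfolding F_def .
  qed
  have Pb: "(norm (P_op X n vtype \<nu> \<phi> \<sigma>))\<^sup>2 \<le> c * A \<sigma>" if sD: "\<sigma> \<in> Dn" for \<sigma>
  proof -
    have sX: "\<sigma> \<in> Xn" using sD D0_sub by blast
    let ?N = "Nbr (face \<sigma>)"
    let ?k = "real (card ?N)"
    have fN: "finite ?N" using Nbr_finite[OF sX] .
    have kpos: "?k > 0" using fN Nbr_self[OF sX] by (auto simp: card_gt_0_iff)
    have "norm (P_op X n vtype \<nu> \<phi> \<sigma>) = (1 / ?k) * norm (\<Sum>\<sigma>'\<in>?N. \<phi> \<sigma>')"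
      unfolding P_eq[OF sX] using kpos by simp
    also have "\<dots> \<le> (1 / ?k) * (\<Sum>\<sigma>'\<in>?N. norm (\<phi> \<sigma>'))"
      by (rule mult_left_mono[OF norm_sum]) (use kpos in simp)
    finally have n1: "norm (P_op X n vtype \<nu> \<phi> \<sigma>) \<le> (1 / ?k) * (\<Sum>\<sigma>'\<in>?N. norm (\<phi> \<sigma>'))" .
    have "(norm (P_op X n vtype \<nu> \<phi> \<sigma>))\<^sup>2 \<le> ((1 / ?k) * (\<Sum>\<sigma>'\<in>?N. norm (\<phi> \<sigma>')))\<^sup>2"
      by (rule power_mono[OF n1]) simp
    also have "\<dots> = (1 / ?k)\<^sup>2 * (\<Sum>\<sigma>'\<in>?N. norm (\<phi> \<sigma>'))\<^sup>2" by (rule power_mult_distrib)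
    also have "\<dots> \<le> (1 / ?k)\<^sup>2 * ((\<Sum>\<sigma>'\<in>?N. (norm (\<phi> \<sigma>'))\<^sup>2) * ?k)"
      by (rule mult_left_mono[OF sum_squared_le_sum_of_squares]) simp
    also have "\<dots> = (1 / ?k) * (\<Sum>\<sigma>'\<in>?N. (norm (\<phi> \<sigma>'))\<^sup>2)" using kpos by (simp add: power2_eq_square)
    also have "\<dots> \<le> (1 / ?k) * (\<Sum>\<sigma>'\<in>?N. c * F \<sigma>')"
      by (rule mult_left_mono[OF sum_mono]) (use phib[OF sD] kpos in auto)
    also have "\<dots> = c * A \<sigma>" unfolding A_def by (simp add: sum_distrib_left[symmetric])
    finally show ?thesis .
  qed
  have "(\<Sum>\<sigma>\<in>Dn. (norm (P_op X n vtype \<nu> \<phi> \<sigma>))\<^sup>2 / w \<sigma>) \<le> (\<Sum>\<sigma>\<in>Dn. c * A \<sigma> / w \<sigma>)"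
  proof (rule sum_mono)
    fix \<sigma> assume sD: "\<sigma> \<in> Dn"
    then have "w \<sigma> > 0" using w_pos D0_sub by blast
    then show "(norm (P_op X n vtype \<nu> \<phi> \<sigma>))\<^sup>2 / w \<sigma> \<le> c * A \<sigma> / w \<sigma>"
      using Pb[OF sD] by (simp add: divide_right_mono)
  qed
  also have "\<dots> = c * (\<Sum>\<sigma>\<in>Dn. A \<sigma> / w \<sigma>)" by (simp add: sum_distrib_left)
  also have "(\<Sum>\<sigma>\<in>Dn. A \<sigma> / w \<sigma>) = (\<Sum>t\<in>E. (\<Sum>\<sigma>\<in>Nbr t. A \<sigma>) / w t)"
    by (rule orbit_sum) (rule Ainv)
  also have "\<dots> = (\<Sum>t\<in>E. (\<Sum>\<sigma>\<in>Nbr t. F \<sigma>) / w t)"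
  proof (rule sum.cong[OF refl])
    fix t assume tE: "t \<in> E"
    have "(\<Sum>\<sigma>\<in>Nbr t. A \<sigma>) = (\<Sum>\<sigma>\<in>Nbr t. (\<Sum>\<sigma>'\<in>Nbr t. F \<sigma>') / real (card (Nbr t)))"
      unfolding A_def by (rule sum.cong[OF refl]) (auto simp: Nbr_def)
    also have "\<dots> = (\<Sum>\<sigma>'\<in>Nbr t. F \<sigma>')"
      using E_Nbr_fin[OF tE] E_Nbr_ne[OF tE] by simp
    finally show "(\<Sum>\<sigma>\<in>Nbr t. A \<sigma>) / w t = (\<Sum>\<sigma>\<in>Nbr t. F \<sigma>) / w t" by simp
  qed
  also have "\<dots> = (\<Sum>\<sigma>\<in>Dn. F \<sigma> / w \<sigma>)"
    by (rule orbit_sum[symmetric]) (rule Finv)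
  also have "\<dots> = (\<Sum>\<sigma>\<in>Dn. (norm (\<phi> \<sigma>))\<^sup>2 / w \<sigma>)"
    unfolding F_def by (rule sum.cong[OF refl]) (simp add: rep_self[OF D0])
  finally show ?thesis .
qed

end

theorem lemma3p7:
  fixes X :: "'v set set" and n :: nat and vtype :: "'v \<Rightarrow> nat"
    and G :: "'g monoid" and T :: "'g topology" and \<mu> :: "'g measure"
    and act :: "'g \<Rightarrow> 'v \<Rightarrow> 'v"
    and \<pi> :: "'g \<Rightarrow> ('e::banach \<Rightarrow>\<^sub>L 'e)"
    and Dn2 Dn1 Dn :: "'v set set"
    and \<nu> :: "nat set"
  assumes n_pos: "n \<ge> 1"
    and complex: "abstract_simplicial_complex X"
    and pure: "pure_dim X n"
    and part: "partite X n vtype"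
    and gallery: "gallery_connected X n"
    and links: "\<forall>\<tau>\<in>cfaces X (n - 1). link_connected_finite_graph X \<tau>"
    and lcgroup: "locally_compact_group G T"
    and haar: "unimodular_haar G T \<mu>"
    and action: "type_preserving_simplicial_action G act X vtype"
    and cocompact: "cocompact_action G act X"
    and stab_open_compact: "\<forall>\<tau>\<in>cfaces X (n - 1) \<union> cfaces X n \<union> cfaces X (n + 1).
        openin T (stab G act \<tau>) \<and> compactin T (stab G act \<tau>)"
    and rep: "strongly_continuous_rep G T \<pi>"
    and D2: "orbit_representatives G act (cfaces X (n - 1)) Dn2"
    and D1: "orbit_representatives G act (cfaces X n) Dn1"
    and D0: "orbit_representatives G act (cfaces X (n + 1)) Dn"
    and D21: "\<forall>\<tau>\<in>Dn2. \<exists>\<sigma>\<in>Dn1. \<tau> \<subseteq> \<sigma>"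
    and D20: "\<forall>\<tau>\<in>Dn2. \<exists>\<sigma>\<in>Dn. \<tau> \<subseteq> \<sigma>"
    and D10: "\<forall>\<tau>\<in>Dn1. \<exists>\<sigma>\<in>Dn. \<tau> \<subseteq> \<sigma>"
    and nu: "\<nu> \<subseteq> {0..n}" "card \<nu> = n"
  shows "op_norm_on (equivariant_maps G act X n \<pi>) (cnorm \<mu> G act Dn) (P_op X n vtype \<nu>)
           \<le> (SUP g\<in>Kset G act n Dn. ereal ((norm (\<pi> g))\<^sup>2))"
proof -
  interpret L: L37 X n vtype G T \<mu> act \<pi> Dn1 Dn \<nu>
    by unfold_locales (fact n_pos complex pure part links lcgroup haar action cocompact
        stab_open_compact D1 D0 nu)+
  define S where "S = (SUP g\<in>Kset G act n Dn. ereal ((norm (\<pi> g))\<^sup>2))"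
  have pi1: "\<pi> \<one>\<^bsub>G\<^esub> = id_blinfun" using rep unfolding strongly_continuous_rep_def by blast
  show ?thesis
    unfolding op_norm_on_def S_def[symmetric]
  proof (rule SUP_least)
    fix \<phi> assume "\<phi> \<in> {\<phi> \<in> equivariant_maps G act X n \<pi>. cnorm \<mu> G act Dn \<phi> \<noteq> 0}"
    then have phi: "\<phi> \<in> equivariant_maps G act X n \<pi>" and cn0: "cnorm \<mu> G act Dn \<phi> \<noteq> 0" by auto
    show "ereal (cnorm \<mu> G act Dn (P_op X n vtype \<nu> \<phi>) / cnorm \<mu> G act Dn \<phi>) \<le> S"
    proof (cases "S = \<infinity>")
      case True
      then show ?thesis by simp
    next
      case False
      have "\<exists>\<sigma>\<in>Dn. \<phi> \<sigma> \<noteq> 0"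
      proof (rule ccontr)
        assume "\<not> ?thesis"
        then have "cnorm \<mu> G act Dn \<phi> = 0" unfolding cnorm_def by simp
        then show False using cn0 by simp
      qed
      then obtain \<sigma>0 where s0: "\<sigma>0 \<in> Dn" "\<phi> \<sigma>0 \<noteq> 0" by blast
      have s0X: "\<sigma>0 \<in> cfaces X (n+1)" using s0(1) L.D0_sub by blast
      have "card (act \<one>\<^bsub>G\<^esub> ` \<sigma>0 \<inter> \<sigma>0) = n + 1"
        using L.acts_one[OF L.Xn_V[OF s0X]] L.Xn_card[OF s0X] by simp
      then have "n - 1 \<le> card (act \<one>\<^bsub>G\<^esub> ` \<sigma>0 \<inter> \<sigma>0)" by simp
      then have oneK: "\<one>\<^bsub>G\<^esub> \<in> Kset G act n Dn" unfolding Kset_def using L.one_cl s0(1) by blast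
      then have le1: "ereal ((norm (\<pi> \<one>\<^bsub>G\<^esub>))\<^sup>2) \<le> S" unfolding S_def by (rule SUP_upper)
      then have "S \<noteq> -\<infinity>" by auto
      then obtain c where Sc: "S = ereal c" using False by (cases S) auto
      have cK: "(norm (\<pi> g))\<^sup>2 \<le> c" if "g \<in> Kset G act n Dn" for g
      proof -
        have "ereal ((norm (\<pi> g))\<^sup>2) \<le> S" unfolding S_def using that by (rule SUP_upper)
        then show ?thesis using Sc by simp
      qed
      have "norm (\<phi> \<sigma>0) \<le> norm (\<pi> \<one>\<^bsub>G\<^esub>) * norm (\<phi> \<sigma>0)"
        using norm_blinfun[of "\<pi> \<one>\<^bsub>G\<^esub>" "\<phi> \<sigma>0"] unfolding pi1 by simp
      then have "1 \<le> norm (\<pi> \<one>\<^bsub>G\<^esub>)" using s0(2) by simp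
      then have "1 \<le> (norm (\<pi> \<one>\<^bsub>G\<^esub>))\<^sup>2" by (simp add: one_le_power)
      then have c1: "1 \<le> c" using cK[OF oneK] by simp
      have mi: "(\<Sum>\<sigma>\<in>Dn. (norm (P_op X n vtype \<nu> \<phi> \<sigma>))\<^sup>2 / measure \<mu> (stab G act \<sigma>))
          \<le> c * (\<Sum>\<sigma>\<in>Dn. (norm (\<phi> \<sigma>))\<^sup>2 / measure \<mu> (stab G act \<sigma>))"
        using L.main_ineq[OF phi cK] unfolding L.w_def by simp
      have "cnorm \<mu> G act Dn (P_op X n vtype \<nu> \<phi>)
          \<le> sqrt (c * (\<Sum>\<sigma>\<in>Dn. (norm (\<phi> \<sigma>))\<^sup>2 / measure \<mu> (stab G act \<sigma>)))"
        unfolding cnorm_def using mi by simp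
      also have "\<dots> = sqrt c * cnorm \<mu> G act Dn \<phi>" unfolding cnorm_def by (simp add: real_sqrt_mult)
      also have "\<dots> \<le> c * cnorm \<mu> G act Dn \<phi>"
      proof (rule mult_right_mono)
        have "1 \<le> sqrt c" using c1 by simp
        then have "sqrt c * 1 \<le> sqrt c * sqrt c" by (intro mult_left_mono) auto
        then show "sqrt c \<le> c" using c1 by simp
        show "0 \<le> cnorm \<mu> G act Dn \<phi>" unfolding cnorm_def
          by (intro real_sqrt_ge_zero sum_nonneg divide_nonneg_nonneg) auto
      qed
      finally have "cnorm \<mu> G act Dn (P_op X n vtype \<nu> \<phi>) \<le> c * cnorm \<mu> G act Dn \<phi>" .
      moreover have "cnorm \<mu> G act Dn \<phi> > 0"
      proof -
        have "0 \<le> cnorm \<mu> G act Dn \<phi>" unfolding cnorm_def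
          by (intro real_sqrt_ge_zero sum_nonneg divide_nonneg_nonneg) auto
        then show ?thesis using cn0 by simp
      qed
      ultimately have "cnorm \<mu> G act Dn (P_op X n vtype \<nu> \<phi>) / cnorm \<mu> G act Dn \<phi> \<le> c"
        by (simp add: divide_le_eq)
      then show ?thesis using Sc by simp
    qed
  qed
qed

end
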